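(* Let $\beta$ be a composition of $N$ with $\ell$ parts, $\mathcal{P}$ a normal subposet of $1<\cdots<\ell$, and $\mathcal{L}$ the total order $1<\cdots<\ell$ (so $\mathrm{UT}_{(\beta,\mathcal{L})}=\mathrm{UT}_\beta$). For $\lambda\in\mathcal{T}^\beta_{\mathcal{P}}$ let $\mathrm{Ext}(\lambda)\in\mathcal{T}^\beta_{\mathcal{L}}$ be $\lambda$ extended by $0$ on pairs $i<j$ with $i\not\prec_{\mathcal{P}}j$. Then, as functions on $\mathrm{UT}_{(\beta,\mathcal{P})}$, $$\frac{\chi^\lambda_\beta}{\chi^\lambda_\beta(1)}=\frac{\mathrm{Res}^{\mathrm{UT}_\beta}_{\mathrm{UT}_{(\beta,\mathcal{P})}}\big(\chi^{\mathrm{Ext}(\lambda)}_\beta\big)}{\chi^{\mathrm{Ext}(\lambda)}_\beta(1)},$$ where on the left $\chi^\lambda_\beta$ is the $P_\beta$-supercharacter of $\mathrm{UT}_{(\beta,\mathcal{P})}$ and on the right $\chi^{\mathrm{Ext}(\lambda)}_\beta$ is the $P_\beta$-supercharacter of $\mathrm{UT}_\beta$.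
   Context: $\mathbb{F}_q$ finite field; $\vartheta:\mathbb{F}_q^+\to\mathbb{C}^\times$ a fixed nontrivial homomorphism. For a subposet $\mathcal{R}$ of $1<\cdots<N$, $\mathfrak{ut}_{\mathcal{R}}=\{x\in M_N(\mathbb{F}_q)\mid x_{ab}\neq0\Rightarrow a\prec_{\mathcal{R}}b\}$, $\mathrm{UT}_{\mathcal{R}}=\mathrm{Id}_N+\mathfrak{ut}_{\mathcal{R}}$. A subposet $\mathcal{P}$ of $\mathcal{R}$ is normal if $j\prec_{\mathcal{P}}k$ implies $i\prec_{\mathcal{P}}k$ and $j\prec_{\mathcal{P}}l$ for all $i\prec_{\mathcal{R}}j$, $k\prec_{\mathcal{R}}l$. For a composition $\beta=(\beta_1,\ldots,\beta_\ell)$ of $N$: $\mathcal{Q}_i=\{\beta_1+\cdots+\beta_{i-1}+1,\ldots,\beta_1+\cdots+\beta_i\}$; $P_\beta$ is the group of invertible block upper triangular matrices (blocks $\mathcal{Q}_i$); $\mathrm{fat}_\beta(\mathcal{P})$ is the poset with $a\prec b$ iff $a\in\mathcal{Q}_i,b\in\mathcal{Q}_j$, $i\prec_{\mathcal{P}}j$; $\mathfrak{ut}_{(\beta,\mathcal{P})}=\mathfrak{ut}_{\mathrm{fat}_\beta(\mathcal{P})}$, $\mathrm{UT}_{(\beta,\mathcal{P})}=\mathrm{UT}_{\mathrm{fat}_\beta(\mathcal{P})}$. $P_\beta$ acts on the dual by $(a\cdot y\cdot b)(x)=y(a^{-1}xb^{-1})$ and $\chi^y_\beta(u)=\sum_{z\in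 P_\beta yP_\beta}\vartheta(z(u-\mathrm{Id}_N))$. $\mathcal{T}^\beta_{\mathcal{P}}$ is the set of $\lambda:\{(i,j)\mid i\prec_{\mathcal{P}}j\}\to\mathbb{Z}_{\ge0}$ with all row sums $\sum_k\lambda_{jk}\le\beta_j$ and column sums $\sum_i\lambda_{ij}\le\beta_j$. A rook placement on $\mathrm{fat}_\beta(\mathcal{P})$ is a $0/1$ function $\tilde\lambda$ on $\{(a,b)\mid a\prec b\}$ using each $a$ at most once as a first coordinate and each $b$ at most once as a second coordinate; $e^*_{\tilde\lambda}=\sum\tilde\lambda_{ab}E^*_{ab}$ with $E^*_{ab}(x)=x_{ab}$; its block count is $(i,j)\mapsto\sum_{a\in\mathcal{Q}_i,b\in\mathcal{Q}_j}\tilde\lambda_{ab}$. The two-sided $P_\beta$-orbit of $e^*_{\tilde\lambda}$ depends only on the block count of $\tilde\lambda$, and for $\lambda\in\mathcal{T}^\beta_{\mathcal{P}}$ we write $\chi^\lambda_\beta=\chi^y_\beta$ with $y=e^*_{\tilde\lambda}$ for any rook placement $\tilde\lambda$ with block count $\lambda$. *)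

theory Defs
  imports Complex_Main
begin

text \<open>Matrices of size N over a field are functions nat => nat => 'a, indexed by
  {1..N}, and zero outside {1..N} x {1..N}.\<close>

type_synonym 'a mat = "nat \<Rightarrow> nat \<Rightarrow> 'a"

definition matsN :: "nat \<Rightarrow> ('a::zero) mat set" where
  "matsN n = {x. \<forall>a b. \<not> (a \<in> {1..n} \<and> b \<in> {1..n}) \<longrightarrow> x a b = 0}"

definition mmult :: "nat \<Rightarrow> ('a::comm_semiring_1) mat \<Rightarrow> 'a mat \<Rightarrow> 'a mat" where
  "mmult n x y = (\<lambda>a b. \<Sum>c\<in>{1..n}. x a c * y c b)"

definition idm :: "nat \<Rightarrow> ('a::{zero,one}) mat" where
  "idm n = (\<lambda>a b. if a = b \<and> a \<in> {1..n} then 1 else 0)"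

definition madd :: "('a::plus) mat \<Rightarrow> 'a mat \<Rightarrow> 'a mat" where
  "madd x y = (\<lambda>a b. x a b + y a b)"

definition msub :: "('a::minus) mat \<Rightarrow> 'a mat \<Rightarrow> 'a mat" where
  "msub x y = (\<lambda>a b. x a b - y a b)"

definition minv :: "nat \<Rightarrow> ('a::comm_semiring_1) mat \<Rightarrow> 'a mat" where
  "minv n g = (THE h. h \<in> matsN n \<and> mmult n g h = idm n \<and> mmult n h g = idm n)"

definition Lord :: "nat \<Rightarrow> (nat \<times> nat) set" where
  "Lord n = {(a, b). 1 \<le> a \<and> a < b \<and> b \<le> n}"

definition subposet :: "nat \<Rightarrow> (nat \<times> nat) set \<Rightarrow> bool" where
  "subposet n P \<longleftrightarrow> P \<subseteq> Lord n \<and> trans P"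

definition normal_sub :: "(nat \<times> nat) set \<Rightarrow> (nat \<times> nat) set \<Rightarrow> bool" where
  "normal_sub R P \<longleftrightarrow> P \<subseteq> R \<and>
     (\<forall>j k. (j, k) \<in> P \<longrightarrow> (\<forall>i. (i, j) \<in> R \<longrightarrow> (i, k) \<in> P) \<and> (\<forall>l. (k, l) \<in> R \<longrightarrow> (j, l) \<in> P))"

definition utR :: "nat \<Rightarrow> (nat \<times> nat) set \<Rightarrow> ('a::zero) mat set" where
  "utR n R = {x \<in> matsN n. \<forall>a b. x a b \<noteq> 0 \<longrightarrow> (a, b) \<in> R}"

definition UTR :: "nat \<Rightarrow> (nat \<times> nat) set \<Rightarrow> ('a::{zero,one,plus}) mat set" where
  "UTR n R = (\<lambda>x. madd (idm n) x) ` utR n R"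

text \<open>Compositions as lists of positive integers; blocks Q_i for i = 1..length beta.\<close>

definition blockQ :: "nat list \<Rightarrow> nat \<Rightarrow> nat set" where
  "blockQ \<beta> i = {sum_list (take (i - 1) \<beta>) + 1 .. sum_list (take i \<beta>)}"

definition fat :: "nat list \<Rightarrow> (nat \<times> nat) set \<Rightarrow> (nat \<times> nat) set" where
  "fat \<beta> P = {(a, b). \<exists>i j. (i, j) \<in> P \<and> a \<in> blockQ \<beta> i \<and> b \<in> blockQ \<beta> j}"

definition Pbeta :: "nat list \<Rightarrow> ('a::field) mat set" where
  "Pbeta \<beta> = {g \<in> matsN (sum_list \<beta>).
      (\<forall>a b. g a b \<noteq> 0 \<longrightarrow> (\<exists>i j. i \<le> j \<and> a \<in> blockQ \<beta> i \<and> b \<in> blockQ \<beta> j)) \<and>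
      (\<exists>h \<in> matsN (sum_list \<beta>). mmult (sum_list \<beta>) g h = idm (sum_list \<beta>) \<and>
                                  mmult (sum_list \<beta>) h g = idm (sum_list \<beta>))}"

text \<open>Linear functionals on ut_(beta,P) are represented as functions on matrices
  that vanish outside ut_(beta,P).\<close>

definition funrest :: "'b set \<Rightarrow> ('b \<Rightarrow> 'a::zero) \<Rightarrow> 'b \<Rightarrow> 'a" where
  "funrest U f = (\<lambda>x. if x \<in> U then f x else 0)"

definition act :: "nat list \<Rightarrow> (nat \<times> nat) set \<Rightarrow> ('a::field) mat \<Rightarrow> ('a mat \<Rightarrow> 'a) \<Rightarrow> 'a mat \<Rightarrow> ('a mat \<Rightarrow> 'a)" where
  "act \<beta> P g y h = funrest (utR (sum_list \<beta>) (fat \<beta> P))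
      (\<lambda>x. y (mmult (sum_list \<beta>) (mmult (sum_list \<beta>) (minv (sum_list \<beta>) g) x) (minv (sum_list \<beta>) h)))"

definition orbit :: "nat list \<Rightarrow> (nat \<times> nat) set \<Rightarrow> (('a::field) mat \<Rightarrow> 'a) \<Rightarrow> ('a mat \<Rightarrow> 'a) set" where
  "orbit \<beta> P y = {act \<beta> P g y h | g h. g \<in> Pbeta \<beta> \<and> h \<in> Pbeta \<beta>}"

definition schar :: "('a::field \<Rightarrow> complex) \<Rightarrow> nat list \<Rightarrow> (nat \<times> nat) set \<Rightarrow> ('a mat \<Rightarrow> 'a) \<Rightarrow> 'a mat \<Rightarrow> complex" where
  "schar \<theta> \<beta> P y u = (\<Sum>z \<in> orbit \<beta> P y. \<theta> (z (msub u (idm (sum_list \<beta>)))))"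

definition rook :: "(nat \<times> nat) set \<Rightarrow> (nat \<Rightarrow> nat \<Rightarrow> nat) \<Rightarrow> bool" where
  "rook R lt \<longleftrightarrow> (\<forall>a b. lt a b \<le> 1) \<and> (\<forall>a b. lt a b \<noteq> 0 \<longrightarrow> (a, b) \<in> R) \<and>
     (\<forall>a b b'. lt a b = 1 \<and> lt a b' = 1 \<longrightarrow> b = b') \<and>
     (\<forall>a a' b. lt a b = 1 \<and> lt a' b = 1 \<longrightarrow> a = a')"

definition estar :: "nat \<Rightarrow> (nat \<times> nat) set \<Rightarrow> (nat \<Rightarrow> nat \<Rightarrow> nat) \<Rightarrow> ('a::field) mat \<Rightarrow> 'a" where
  "estar n R lt = funrest (utR n R) (\<lambda>x. \<Sum>(a, b) \<in> R. of_nat (lt a b) * x a b)"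

definition blockcount :: "nat list \<Rightarrow> (nat \<Rightarrow> nat \<Rightarrow> nat) \<Rightarrow> nat \<Rightarrow> nat \<Rightarrow> nat" where
  "blockcount \<beta> lt i j = (\<Sum>a \<in> blockQ \<beta> i. \<Sum>b \<in> blockQ \<beta> j. lt a b)"

definition Tset :: "nat list \<Rightarrow> (nat \<times> nat) set \<Rightarrow> (nat \<Rightarrow> nat \<Rightarrow> nat) set" where
  "Tset \<beta> P = {lam. (\<forall>i j. lam i j \<noteq> 0 \<longrightarrow> (i, j) \<in> P) \<and>
      (\<forall>j \<in> {1..length \<beta>}. (\<Sum>k \<in> {k. (j, k) \<in> P}. lam j k) \<le> \<beta> ! (j - 1) \<and>
                            (\<Sum>i \<in> {i. (i, j) \<in> P}. lam i j) \<le> \<beta> ! (j - 1))}"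

definition chi :: "('a::field \<Rightarrow> complex) \<Rightarrow> nat list \<Rightarrow> (nat \<times> nat) set \<Rightarrow> (nat \<Rightarrow> nat \<Rightarrow> nat) \<Rightarrow> 'a mat \<Rightarrow> complex" where
  "chi \<theta> \<beta> P lam = schar \<theta> \<beta> P
     (estar (sum_list \<beta>) (fat \<beta> P)
        (SOME lt. rook (fat \<beta> P) lt \<and> (\<forall>(i, j) \<in> P. blockcount \<beta> lt i j = lam i j)))"

definition Ext :: "(nat \<times> nat) set \<Rightarrow> (nat \<Rightarrow> nat \<Rightarrow> nat) \<Rightarrow> nat \<Rightarrow> nat \<Rightarrow> nat" where
  "Ext P lam = (\<lambda>i j. if (i, j) \<in> P then lam i j else 0)"

end

theory Submission
  imports Defs "HOL-Library.FuncSet"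
begin

lemma mmult_assoc: "mmult n (mmult n x y) z = mmult n x (mmult n y (z::'a::comm_semiring_1 mat))"
  unfolding mmult_def
  apply (rule ext)+ apply (simp add: sum_distrib_left sum_distrib_right mult.assoc)
  by (rule sum.swap)

lemma idm_left: "x \<in> matsN n \<Longrightarrow> mmult n (idm n) x = (x::'a::comm_semiring_1 mat)"
  unfolding mmult_def idm_def
proof (rule ext, rule ext)
  fix a b assume x: "x \<in> matsN n"
  show "(\<Sum>c\<in>{1..n}. (if a = c \<and> a \<in> {1..n} then 1 else 0) * x c b) = x a b"
  proof (cases "a \<in> {1..n}")
    case True
    then show ?thesis by (simp add: if_distrib[of "\<lambda>t. t * _"] cong: if_cong)
  next
    case False
    then show ?thesis using x unfolding matsN_def by auto
  qed
qed

lemma idm_right: "x \<in> matsN n \<Longrightarrow> mmult n x (idm n) = (x::'a::comm_semiring_1 mat)"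
  unfolding mmult_def idm_def
proof (rule ext, rule ext)
  fix a b assume x: "x \<in> matsN n"
  show "(\<Sum>c\<in>{1..n}. x a c * (if c = b \<and> c \<in> {1..n} then 1 else 0)) = x a b"
  proof (cases "b \<in> {1..n}")
    case True
    then show ?thesis by (simp add: if_distrib[of "\<lambda>t. _ * t"] cong: if_cong)
  next
    case False
    then show ?thesis using x unfolding matsN_def by auto
  qed
qed

lemma mmult_mats: "x \<in> matsN n \<Longrightarrow> y \<in> matsN n \<Longrightarrow> mmult n x y \<in> matsN n"
  unfolding mmult_def matsN_def by auto

lemma idm_mats: "idm n \<in> matsN n"
  unfolding idm_def matsN_def by auto

lemma minv_eq:
  assumes "h \<in> matsN n" "mmult n g h = idm n" "mmult n h g = (idm n :: 'a::comm_semiring_1 mat)"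
  shows "minv n g = h"
  unfolding minv_def
proof (rule the_equality)
  show "h \<in> matsN n \<and> mmult n g h = idm n \<and> mmult n h g = idm n" using assms by auto
  fix h' assume h': "h' \<in> matsN n \<and> mmult n g h' = idm n \<and> mmult n h' g = idm n"
  have "h' = mmult n h' (mmult n g h)" using h' assms by (simp add: idm_right)
  also have "\<dots> = mmult n (mmult n h' g) h" by (simp add: mmult_assoc)
  also have "\<dots> = h" using h' assms by (simp add: idm_left)
  finally show "h' = h" .
qed


lemma sum_take_mono: "i \<le> j \<Longrightarrow> sum_list (take i (xs::nat list)) \<le> sum_list (take j xs)"
proof -
  assume "i \<le> j"
  then have "take j xs = take i xs @ take (j - i) (drop i xs)"
    by (metis add_diff_inverse_nat not_le take_add)
  then show ?thesis by simp
qed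

lemma blockQ_range:
  assumes "a \<in> blockQ \<beta> i"
  shows "1 \<le> i \<and> i \<le> length \<beta> \<and> 1 \<le> a \<and> a \<le> sum_list \<beta>"
proof -
  have a1: "sum_list (take (i - 1) \<beta>) + 1 \<le> a" "a \<le> sum_list (take i \<beta>)"
    using assms unfolding blockQ_def by auto
  have "i \<noteq> 0" using a1 by (cases i) auto
  moreover have "i \<le> length \<beta>"
  proof (rule ccontr)
    assume "\<not> i \<le> length \<beta>"
    then have "take (i - 1) \<beta> = \<beta>" "take i \<beta> = \<beta>" by auto
    then show False using a1 by auto
  qed
  moreover have "sum_list (take i \<beta>) \<le> sum_list \<beta>"
    by (metis append_take_drop_id sum_list_append le_add1)
  ultimately show ?thesis using a1 by auto
qed

lemma blockQ_disj:
  assumes "a \<in> blockQ \<beta> i" "a \<in> blockQ \<beta> j"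
  shows "i = j"
proof (rule ccontr)
  assume ne: "i \<noteq> j"
  have i1: "1 \<le> i" "1 \<le> j" using blockQ_range assms by blast+
  { fix p q assume "a \<in> blockQ \<beta> p" "a \<in> blockQ \<beta> q" "p < q"
    then have "a \<le> sum_list (take p \<beta>)" "sum_list (take (q - 1) \<beta>) + 1 \<le> a"
      unfolding blockQ_def by auto
    moreover have "sum_list (take p \<beta>) \<le> sum_list (take (q - 1) \<beta>)"
      using \<open>p < q\<close> by (intro sum_take_mono) auto
    ultimately have False by auto }
  then show False using ne assms by (metis linorder_neqE_nat)
qed

lemma blockQ_cover:
  assumes "1 \<le> a" "a \<le> sum_list \<beta>"
  shows "\<exists>i. a \<in> blockQ \<beta> i"
proof -
  define i where "i = (LEAST i. a \<le> sum_list (take i \<beta>))"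
  have ex: "a \<le> sum_list (take (length \<beta>) \<beta>)" using assms by simp
  have i: "a \<le> sum_list (take i \<beta>)" unfolding i_def by (rule LeastI[of "\<lambda>i. a \<le> sum_list (take i \<beta>)", OF ex])
  have "i \<noteq> 0" using i assms by (cases i) auto
  then have "\<not> a \<le> sum_list (take (i - 1) \<beta>)"
    unfolding i_def by (metis (lifting) diff_less less_one not_less_Least not_gr_zero i_def)
  then have "a \<in> blockQ \<beta> i" using i unfolding blockQ_def by auto
  then show ?thesis by blast
qed

lemma finite_blockQ: "finite (blockQ \<beta> i)"
  unfolding blockQ_def by simp

lemma fat_sub: "fat \<beta> R \<subseteq> {1..sum_list \<beta>} \<times> {1..sum_list \<beta>}"
  unfolding fat_def using blockQ_range by fastforce

lemma finite_fat: "finite (fat \<beta> R)"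
  by (rule finite_subset[OF fat_sub]) simp

lemma fat_mono: "P \<subseteq> R \<Longrightarrow> fat \<beta> P \<subseteq> fat \<beta> R"
  unfolding fat_def by blast

lemma fat_blocks:
  assumes "(a, b) \<in> fat \<beta> R" "a \<in> blockQ \<beta> i" "b \<in> blockQ \<beta> j"
  shows "(i, j) \<in> R"
  using assms blockQ_disj unfolding fat_def by blast


lemma finite_matsN: "finite (matsN n :: ('a::{finite,zero}) mat set)"
proof -
  let ?I = "{1..n} \<times> {1..n}"
  let ?f = "\<lambda>x::'a mat. restrict (case_prod x) ?I"
  have "inj_on ?f (matsN n)"
  proof (rule inj_onI)
    fix x y :: "'a mat" assume xy: "x \<in> matsN n" "y \<in> matsN n" "?f x = ?f y"
    show "x = y"
    proof (rule ext, rule ext)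
      fix a b
      show "x a b = y a b" using xy
        apply (cases "(a, b) \<in> ?I")
        apply (metis (no_types, lifting) case_prod_conv restrict_apply')
        by (auto simp: matsN_def)
    qed
  qed
  moreover have "?f ` matsN n \<subseteq> PiE ?I (\<lambda>_. UNIV)" by (intro image_subsetI) (simp add: restrict_PiE_iff)
  moreover have "finite (PiE ?I (\<lambda>_. UNIV :: 'a set))" by (rule finite_PiE) auto
  ultimately show ?thesis using inj_on_finite by blast
qed

definition BT :: "nat list \<Rightarrow> ('a::field) mat set" where
  "BT \<beta> = {g \<in> matsN (sum_list \<beta>).
      (\<forall>a b. g a b \<noteq> 0 \<longrightarrow> (\<exists>i j. i \<le> j \<and> a \<in> blockQ \<beta> i \<and> b \<in> blockQ \<beta> j))}"

lemma Pbeta_alt: "Pbeta \<beta> = {g \<in> BT \<beta>. \<exists>h \<in> matsN (sum_list \<beta>). mmult (sum_list \<beta>) g h = idm (sum_list \<beta>) \<and>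
                                  mmult (sum_list \<beta>) h g = idm (sum_list \<beta>)}"
  unfolding Pbeta_def BT_def by auto

lemma sum_nz: "sum f A \<noteq> (0::'a::comm_monoid_add) \<Longrightarrow> \<exists>x\<in>A. f x \<noteq> 0"
  by (meson sum.neutral)

lemma BT_mult:
  assumes "m1 \<in> BT \<beta>" "m2 \<in> BT \<beta>"
  shows "mmult (sum_list \<beta>) m1 m2 \<in> BT \<beta>"
  unfolding BT_def
proof (intro CollectI conjI allI impI)
  show "mmult (sum_list \<beta>) m1 m2 \<in> matsN (sum_list \<beta>)"
    using assms by (intro mmult_mats) (auto simp: BT_def)
  fix a b assume "mmult (sum_list \<beta>) m1 m2 a b \<noteq> 0"
  then obtain c where "m1 a c * m2 c b \<noteq> 0" unfolding mmult_def by (auto dest: sum_nz)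
  then have "m1 a c \<noteq> 0" "m2 c b \<noteq> 0" by auto
  then obtain i j j' k where "i \<le> j" "a \<in> blockQ \<beta> i" "c \<in> blockQ \<beta> j"
      "j' \<le> k" "c \<in> blockQ \<beta> j'" "b \<in> blockQ \<beta> k"
    using assms unfolding BT_def by blast
  moreover have "j = j'" using blockQ_disj calculation by blast
  ultimately show "\<exists>i j. i \<le> j \<and> a \<in> blockQ \<beta> i \<and> b \<in> blockQ \<beta> j" using le_trans by blast
qed

lemma idm_BT: "idm (sum_list \<beta>) \<in> BT \<beta>"
  unfolding BT_def
proof (intro CollectI conjI allI impI)
  show "idm (sum_list \<beta>) \<in> matsN (sum_list \<beta>)" by (rule idm_mats)
  fix a b assume "idm (sum_list \<beta>) a b \<noteq> (0::'a)"
  then have ab: "a = b" "1 \<le> a" "a \<le> sum_list \<beta>" by (auto simp: idm_def split: if_splits)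
  then obtain i where "a \<in> blockQ \<beta> i" using blockQ_cover by blast
  then show "\<exists>i j. i \<le> j \<and> a \<in> blockQ \<beta> i \<and> b \<in> blockQ \<beta> j" using ab by blast
qed

lemma finite_BT: "finite (BT \<beta> :: ('a::{finite,field}) mat set)"
  by (rule finite_subset[OF _ finite_matsN]) (auto simp: BT_def)

lemma Pbeta_props:
  fixes g :: "('a::{finite,field}) mat"
  assumes "g \<in> Pbeta \<beta>"
  shows "minv (sum_list \<beta>) g \<in> Pbeta \<beta>" "minv (sum_list \<beta>) g \<in> matsN (sum_list \<beta>)"
    "g \<in> matsN (sum_list \<beta>)"
    "mmult (sum_list \<beta>) g (minv (sum_list \<beta>) g) = idm (sum_list \<beta>)"
    "mmult (sum_list \<beta>) (minv (sum_list \<beta>) g) g = idm (sum_list \<beta>)"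
    "minv (sum_list \<beta>) (minv (sum_list \<beta>) g) = g"
proof -
  let ?n = "sum_list \<beta>"
  obtain h where h: "h \<in> matsN ?n" "mmult ?n g h = idm ?n" "mmult ?n h g = idm ?n"
    and gB: "g \<in> BT \<beta>" using assms unfolding Pbeta_alt by blast
  have gM: "g \<in> matsN ?n" using gB by (simp add: BT_def)
  have mi: "minv ?n g = h" using minv_eq h by blast
  have "(\<lambda>m. mmult ?n g m) ` BT \<beta> = BT \<beta>"
  proof (rule endo_inj_surj[OF finite_BT])
    show "(\<lambda>m. mmult ?n g m) ` BT \<beta> \<subseteq> BT \<beta>" using BT_mult gB by blast
    show "inj_on (\<lambda>m. mmult ?n g m) (BT \<beta>)"
    proof (rule inj_onI)
      fix x y assume xy: "x \<in> BT \<beta>" "y \<in> BT \<beta>" "mmult ?n g x = mmult ?n g y"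
      have "x = mmult ?n (mmult ?n h g) x" using xy by (simp add: h idm_left BT_def)
      also have "\<dots> = mmult ?n h (mmult ?n g y)" by (simp only: mmult_assoc xy)
      also have "\<dots> = mmult ?n (mmult ?n h g) y" by (simp only: mmult_assoc)
      also have "\<dots> = y" using xy by (simp add: h idm_left BT_def)
      finally show "x = y" .
    qed
  qed
  then obtain m where m: "m \<in> BT \<beta>" "mmult ?n g m = idm ?n" using idm_BT by (metis imageE)
  have mM: "m \<in> matsN ?n" using m by (simp add: BT_def)
  have "m = mmult ?n (mmult ?n h g) m" using mM by (simp add: h idm_left)
  also have "\<dots> = mmult ?n h (mmult ?n g m)" by (simp only: mmult_assoc)
  also have "\<dots> = h" by (simp add: m h idm_right)
  finally have "h \<in> BT \<beta>" using m by simp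
  then show "minv ?n g \<in> Pbeta \<beta>" unfolding mi Pbeta_alt using gM h by blast
  show "minv ?n g \<in> matsN ?n" "g \<in> matsN ?n"
    "mmult ?n g (minv ?n g) = idm ?n" "mmult ?n (minv ?n g) g = idm ?n"
    using mi h gM by auto
  show "minv ?n (minv ?n g) = g" unfolding mi using gM h by (intro minv_eq) auto
qed

lemma Pbeta_mult:
  fixes g1 :: "('a::{finite,field}) mat"
  assumes "g1 \<in> Pbeta \<beta>" "g2 \<in> Pbeta \<beta>"
  shows "mmult (sum_list \<beta>) g1 g2 \<in> Pbeta \<beta>"
    "minv (sum_list \<beta>) (mmult (sum_list \<beta>) g1 g2) =
       mmult (sum_list \<beta>) (minv (sum_list \<beta>) g2) (minv (sum_list \<beta>) g1)"
proof -
  let ?n = "sum_list \<beta>"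
  note p1 = Pbeta_props[OF assms(1)] and p2 = Pbeta_props[OF assms(2)]
  have e1: "mmult ?n (mmult ?n g1 g2) (mmult ?n (minv ?n g2) (minv ?n g1)) = idm ?n"
  proof -
    have "mmult ?n (mmult ?n g1 g2) (mmult ?n (minv ?n g2) (minv ?n g1))
       = mmult ?n g1 (mmult ?n (mmult ?n g2 (minv ?n g2)) (minv ?n g1))"
      by (simp only: mmult_assoc)
    also have "\<dots> = idm ?n" using p1 p2 by (simp add: idm_left)
    finally show ?thesis .
  qed
  have e2: "mmult ?n (mmult ?n (minv ?n g2) (minv ?n g1)) (mmult ?n g1 g2) = idm ?n"
  proof -
    have "mmult ?n (mmult ?n (minv ?n g2) (minv ?n g1)) (mmult ?n g1 g2)
       = mmult ?n (minv ?n g2) (mmult ?n (mmult ?n (minv ?n g1) g1) g2)"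
      by (simp only: mmult_assoc)
    also have "\<dots> = idm ?n" using p1 p2 by (simp add: idm_left)
    finally show ?thesis .
  qed
  have "mmult ?n g1 g2 \<in> BT \<beta>" using assms BT_mult unfolding Pbeta_alt by blast
  then show "mmult ?n g1 g2 \<in> Pbeta \<beta>" unfolding Pbeta_alt
    using e1 e2 p1 p2 mmult_mats by blast
  show "minv ?n (mmult ?n g1 g2) = mmult ?n (minv ?n g2) (minv ?n g1)"
    using e1 e2 p1 p2 by (intro minv_eq mmult_mats) auto
qed

lemma idm_Pbeta: "idm (sum_list \<beta>) \<in> (Pbeta \<beta> :: ('a::field) mat set)"
  unfolding Pbeta_alt using idm_BT idm_mats idm_left by blast

lemma minv_idm: "minv n (idm n) = (idm n :: ('a::field) mat)"
  using minv_eq idm_mats idm_left by blast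

lemma finite_Pbeta: "finite (Pbeta \<beta> :: ('a::{finite,field}) mat set)"
  by (rule finite_subset[OF _ finite_BT]) (auto simp: Pbeta_alt)


lemma ut_stable:
  assumes nR: "normal_sub (Lord (length \<beta>)) R" and A: "A \<in> BT \<beta>" and C: "C \<in> BT \<beta>"
    and x: "x \<in> utR (sum_list \<beta>) (fat \<beta> R)"
  shows "mmult (sum_list \<beta>) (mmult (sum_list \<beta>) A x) C \<in> utR (sum_list \<beta>) (fat \<beta> R)"
  unfolding utR_def
proof (intro CollectI conjI allI impI)
  let ?n = "sum_list \<beta>"
  show "mmult ?n (mmult ?n A x) C \<in> matsN ?n"
    using A C x by (intro mmult_mats) (auto simp: BT_def utR_def)
  fix a b assume "mmult ?n (mmult ?n A x) C a b \<noteq> 0"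
  then obtain d where "(\<Sum>c\<in>{1..?n}. A a c * x c d) * C d b \<noteq> 0"
    unfolding mmult_def by (auto dest: sum_nz)
  then obtain c where "A a c * x c d \<noteq> 0" "C d b \<noteq> 0" by (auto dest: sum_nz)
  then have nz: "A a c \<noteq> 0" "x c d \<noteq> 0" "C d b \<noteq> 0" by auto
  obtain i i' where i: "i \<le> i'" "a \<in> blockQ \<beta> i" "c \<in> blockQ \<beta> i'"
    using A nz unfolding BT_def by blast
  obtain j j' where j: "j' \<le> j" "d \<in> blockQ \<beta> j'" "b \<in> blockQ \<beta> j"
    using C nz unfolding BT_def by blast
  have "(c, d) \<in> fat \<beta> R" using x nz unfolding utR_def by blast
  then have R: "(i', j') \<in> R" using fat_blocks i j by blast
  have RL: "R \<subseteq> Lord (length \<beta>)" using nR unfolding normal_sub_def by blast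
  have L: "1 \<le> i" "j \<le> length \<beta>" using blockQ_range i j by blast+
  have pq: "i' < j'" "j' \<le> length \<beta>" "1 \<le> i'" using RL R unfolding Lord_def by auto
  have R2: "(i, j') \<in> R"
  proof (cases "i < i'")
    case True
    then have "(i, i') \<in> Lord (length \<beta>)" using L pq unfolding Lord_def by auto
    then show ?thesis using nR R unfolding normal_sub_def by blast
  next
    case False then show ?thesis using i R by auto
  qed
  have R3: "(i, j) \<in> R"
  proof (cases "j' < j")
    case True
    then have "(j', j) \<in> Lord (length \<beta>)" using L pq unfolding Lord_def by auto
    then show ?thesis using nR R2 unfolding normal_sub_def by blast
  next
    case False then show ?thesis using j R2 by auto
  qed
  show "(a, b) \<in> fat \<beta> R" unfolding fat_def using R3 i j by blast
qed

lemma act_comp: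
  fixes g1 :: "('a::{finite,field}) mat"
  assumes nR: "normal_sub (Lord (length \<beta>)) R"
    and g: "g1 \<in> Pbeta \<beta>" "g2 \<in> Pbeta \<beta>" "h1 \<in> Pbeta \<beta>" "h2 \<in> Pbeta \<beta>"
  shows "act \<beta> R (mmult (sum_list \<beta>) g1 g2) y (mmult (sum_list \<beta>) h2 h1) =
         act \<beta> R g1 (act \<beta> R g2 y h2) h1"
proof (rule ext)
  fix x
  let ?n = "sum_list \<beta>" and ?U = "utR (sum_list \<beta>) (fat \<beta> R)"
  show "act \<beta> R (mmult ?n g1 g2) y (mmult ?n h2 h1) x = act \<beta> R g1 (act \<beta> R g2 y h2) h1 x"
  proof (cases "x \<in> ?U")
    case True
    have st: "mmult ?n (mmult ?n (minv ?n g1) x) (minv ?n h1) \<in> ?U"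
      using ut_stable[OF nR _ _ True] Pbeta_props(1) g unfolding Pbeta_alt by blast
    have "mmult ?n (mmult ?n (minv ?n (mmult ?n g1 g2)) x) (minv ?n (mmult ?n h2 h1)) =
          mmult ?n (mmult ?n (minv ?n g2) (mmult ?n (mmult ?n (minv ?n g1) x) (minv ?n h1))) (minv ?n h2)"
      using g by (simp only: Pbeta_mult mmult_assoc)
    then show ?thesis using True st unfolding act_def funrest_def by simp
  next
    case False
    then show ?thesis unfolding act_def funrest_def by simp
  qed
qed

lemma act_id:
  assumes "\<forall>x. x \<notin> utR (sum_list \<beta>) (fat \<beta> R) \<longrightarrow> y x = 0"
  shows "act \<beta> R (idm (sum_list \<beta>)) y (idm (sum_list \<beta>)) = (y :: ('a::field) mat \<Rightarrow> 'a)"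
proof (rule ext)
  fix x
  show "act \<beta> R (idm (sum_list \<beta>)) y (idm (sum_list \<beta>)) x = y x"
    using assms unfolding act_def funrest_def
    by (auto simp: minv_idm idm_left idm_right utR_def)
qed


lemma schar_avg:
  fixes \<theta> :: "'a::{finite,field} \<Rightarrow> complex" and y :: "'a mat \<Rightarrow> 'a"
  assumes nR: "normal_sub (Lord (length \<beta>)) R"
    and yv: "\<forall>x. x \<notin> utR (sum_list \<beta>) (fat \<beta> R) \<longrightarrow> y x = 0"
  shows "of_nat (card {p \<in> Pbeta \<beta> \<times> Pbeta \<beta>. act \<beta> R (fst p) y (snd p) = y}) * schar \<theta> \<beta> R y u =
     (\<Sum>p\<in>Pbeta \<beta> \<times> Pbeta \<beta>. \<theta> (act \<beta> R (fst p) y (snd p) (msub u (idm (sum_list \<beta>)))))"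
    "card {p \<in> Pbeta \<beta> \<times> Pbeta \<beta>. act \<beta> R (fst p) y (snd p) = y} > 0"
proof -
  let ?n = "sum_list \<beta>"
  define G where "G = (Pbeta \<beta> :: 'a mat set)"
  define F where "F = (\<lambda>p. act \<beta> R (fst p) y (snd p))"
  define St where "St = {p \<in> G \<times> G. F p = y}"
  define v where "v = msub u (idm ?n)"
  have finG: "finite (G \<times> G)" unfolding G_def using finite_Pbeta by blast
  have IG: "idm ?n \<in> G" unfolding G_def by (rule idm_Pbeta)
  have orb: "orbit \<beta> R y = F ` (G \<times> G)"
    unfolding orbit_def F_def G_def by force
  have fib: "card {p \<in> G \<times> G. F p = F p0} = card St" if p0: "p0 \<in> G \<times> G" for p0
  proof -
    obtain g0 h0 where p0e: "p0 = (g0, h0)" "g0 \<in> G" "h0 \<in> G" using p0 by auto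
    note pg = Pbeta_props[OF p0e(2)[unfolded G_def]] and ph = Pbeta_props[OF p0e(3)[unfolded G_def]]
    define \<phi> where "\<phi> = (\<lambda>p. (mmult ?n g0 (fst p), mmult ?n (snd p) h0))"
    define \<psi> where "\<psi> = (\<lambda>p. (mmult ?n (minv ?n g0) (fst p), mmult ?n (snd p) (minv ?n h0)))"
    have "bij_betw \<phi> St {p \<in> G \<times> G. F p = F p0}"
    proof (rule bij_betw_byWitness)
      show "\<forall>a\<in>St. \<psi> (\<phi> a) = a"
      proof
        fix a assume a: "a \<in> St"
        then have m: "fst a \<in> matsN ?n" "snd a \<in> matsN ?n"
          unfolding St_def G_def using Pbeta_props(3) by auto
        show "\<psi> (\<phi> a) = a" unfolding \<phi>_def \<psi>_def
          by (simp add: mmult_assoc[symmetric] pg ph idm_left idm_right m)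
             (simp add: mmult_assoc ph idm_right m)
      qed
      show "\<forall>a\<in>{p \<in> G \<times> G. F p = F p0}. \<phi> (\<psi> a) = a"
      proof
        fix a assume a: "a \<in> {p \<in> G \<times> G. F p = F p0}"
        then have m: "fst a \<in> matsN ?n" "snd a \<in> matsN ?n"
          unfolding G_def using Pbeta_props(3) by auto
        show "\<phi> (\<psi> a) = a" unfolding \<phi>_def \<psi>_def
          by (simp add: mmult_assoc[symmetric] pg ph idm_left idm_right m)
             (simp add: mmult_assoc ph idm_right m)
      qed
      show "\<phi> ` St \<subseteq> {p \<in> G \<times> G. F p = F p0}"
      proof
        fix q assume "q \<in> \<phi> ` St"
        then obtain g h where gh: "g \<in> G" "h \<in> G" "F (g, h) = y" "q = \<phi> (g, h)"
          unfolding St_def by auto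
        have "F q = act \<beta> R g0 (act \<beta> R g y h) h0"
          unfolding gh F_def \<phi>_def using act_comp[OF nR] p0e gh unfolding G_def by simp
        also have "\<dots> = F p0" using gh p0e unfolding F_def by simp
        finally show "q \<in> {p \<in> G \<times> G. F p = F p0}"
          using gh p0e Pbeta_mult unfolding \<phi>_def G_def by auto
      qed
      show "\<psi> ` {p \<in> G \<times> G. F p = F p0} \<subseteq> St"
      proof
        fix q assume "q \<in> \<psi> ` {p \<in> G \<times> G. F p = F p0}"
        then obtain g h where gh: "g \<in> G" "h \<in> G" "F (g, h) = F p0" "q = \<psi> (g, h)"
          by auto
        have "F q = act \<beta> R (minv ?n g0) (act \<beta> R g y h) (minv ?n h0)"
          unfolding gh F_def \<psi>_def using act_comp[OF nR] p0e gh pg ph unfolding G_def by simp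
        also have "\<dots> = act \<beta> R (minv ?n g0) (act \<beta> R g0 y h0) (minv ?n h0)"
          using gh p0e unfolding F_def by simp
        also have "\<dots> = act \<beta> R (mmult ?n (minv ?n g0) g0) y (mmult ?n h0 (minv ?n h0))"
          by (rule act_comp[OF nR pg(1) p0e(2)[unfolded G_def] ph(1) p0e(3)[unfolded G_def], symmetric])
        also have "\<dots> = y" using pg ph act_id[OF yv] by simp
        finally show "q \<in> St"
          using gh p0e pg ph Pbeta_mult unfolding \<psi>_def G_def St_def by auto
      qed
    qed
    then show ?thesis by (simp add: bij_betw_same_card)
  qed
  have "(\<Sum>p\<in>G \<times> G. \<theta> (F p v)) = (\<Sum>z\<in>F ` (G \<times> G). \<Sum>p\<in>{p \<in> G \<times> G. F p = z}. \<theta> (F p v))"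
    by (rule sum.image_gen[OF finG])
  also have "\<dots> = (\<Sum>z\<in>F ` (G \<times> G). of_nat (card St) * \<theta> (z v))"
  proof (rule sum.cong[OF refl])
    fix z assume "z \<in> F ` (G \<times> G)"
    then obtain p0 where p0: "p0 \<in> G \<times> G" "z = F p0" by auto
    have "(\<Sum>p\<in>{p \<in> G \<times> G. F p = z}. \<theta> (F p v)) = (\<Sum>p\<in>{p \<in> G \<times> G. F p = z}. \<theta> (z v))"
      by (rule sum.cong) auto
    also have "\<dots> = of_nat (card St) * \<theta> (z v)" using fib[OF p0(1)] p0(2) by simp
    finally show "(\<Sum>p\<in>{p \<in> G \<times> G. F p = z}. \<theta> (F p v)) = of_nat (card St) * \<theta> (z v)" .
  qed
  also have "\<dots> = of_nat (card St) * schar \<theta> \<beta> R y u"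
    unfolding schar_def orb v_def by (simp add: sum_distrib_left)
  finally show "of_nat (card {p \<in> Pbeta \<beta> \<times> Pbeta \<beta>. act \<beta> R (fst p) y (snd p) = y}) * schar \<theta> \<beta> R y u =
     (\<Sum>p\<in>Pbeta \<beta> \<times> Pbeta \<beta>. \<theta> (act \<beta> R (fst p) y (snd p) (msub u (idm (sum_list \<beta>)))))"
    unfolding St_def F_def G_def v_def by simp
  have "(idm ?n, idm ?n) \<in> St" unfolding St_def F_def using IG act_id[OF yv] by simp
  moreover have "finite St" unfolding St_def using finG by simp
  ultimately have "card St > 0" by (auto simp: card_gt_0_iff)
  then show "card {p \<in> Pbeta \<beta> \<times> Pbeta \<beta>. act \<beta> R (fst p) y (snd p) = y} > 0"
    unfolding St_def F_def G_def by simp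
qed


lemma normal_Lord: "normal_sub (Lord m) (Lord m)"
  unfolding normal_sub_def Lord_def by auto

lemma utR_mono: "R \<subseteq> S \<Longrightarrow> utR n R \<subseteq> utR n S"
  unfolding utR_def by blast

lemma estar_eq:
  assumes "fat \<beta> P \<subseteq> fat \<beta> L" "w \<in> utR (sum_list \<beta>) (fat \<beta> P)"
  shows "estar (sum_list \<beta>) (fat \<beta> L) lt w = (estar (sum_list \<beta>) (fat \<beta> P) lt w :: 'a::field)"
proof -
  have wL: "w \<in> utR (sum_list \<beta>) (fat \<beta> L)" using assms utR_mono by blast
  have "(\<Sum>(a, b)\<in>fat \<beta> L. of_nat (lt a b) * w a b) = (\<Sum>(a, b)\<in>fat \<beta> P. of_nat (lt a b) * (w a b :: 'a))"
    by (rule sum.mono_neutral_right[OF finite_fat assms(1)])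
       (use assms(2) in \<open>auto simp: utR_def\<close>)
  then show ?thesis using assms wL unfolding estar_def funrest_def by simp
qed

lemma pred_eq:
  assumes PL: "P \<subseteq> Lord (length \<beta>)"
  shows "(\<lambda>lt. rook (fat \<beta> P) lt \<and> (\<forall>(i, j) \<in> P. blockcount \<beta> lt i j = lam i j)) =
         (\<lambda>lt. rook (fat \<beta> (Lord (length \<beta>))) lt \<and>
               (\<forall>(i, j) \<in> Lord (length \<beta>). blockcount \<beta> lt i j = Ext P lam i j))"
proof (rule ext)
  fix lt
  let ?L = "Lord (length \<beta>)"
  have fs: "fat \<beta> P \<subseteq> fat \<beta> ?L" using fat_mono PL by blast
  show "(rook (fat \<beta> P) lt \<and> (\<forall>(i, j) \<in> P. blockcount \<beta> lt i j = lam i j)) =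
        (rook (fat \<beta> ?L) lt \<and> (\<forall>(i, j) \<in> ?L. blockcount \<beta> lt i j = Ext P lam i j))"
  proof
    assume a: "rook (fat \<beta> P) lt \<and> (\<forall>(i, j) \<in> P. blockcount \<beta> lt i j = lam i j)"
    have r: "rook (fat \<beta> ?L) lt" using a fs unfolding rook_def by blast
    have "blockcount \<beta> lt i j = Ext P lam i j" if ij: "(i, j) \<in> ?L" for i j
    proof (cases "(i, j) \<in> P")
      case True then show ?thesis using a unfolding Ext_def by auto
    next
      case False
      have "lt a b = 0" if "a \<in> blockQ \<beta> i" "b \<in> blockQ \<beta> j" for a b
      proof (rule ccontr)
        assume "lt a b \<noteq> 0"
        then have "(a, b) \<in> fat \<beta> P" using a unfolding rook_def by blast
        then show False using fat_blocks that False by blast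
      qed
      then show ?thesis using False unfolding blockcount_def Ext_def by simp
    qed
    then show "rook (fat \<beta> ?L) lt \<and> (\<forall>(i, j) \<in> ?L. blockcount \<beta> lt i j = Ext P lam i j)"
      using r by auto
  next
    assume a: "rook (fat \<beta> ?L) lt \<and> (\<forall>(i, j) \<in> ?L. blockcount \<beta> lt i j = Ext P lam i j)"
    have "(a, b) \<in> fat \<beta> P" if nz: "lt a b \<noteq> 0" for a b
    proof -
      have "(a, b) \<in> fat \<beta> ?L" using a nz unfolding rook_def by blast
      then obtain i j where ij: "(i, j) \<in> ?L" "a \<in> blockQ \<beta> i" "b \<in> blockQ \<beta> j"
        unfolding fat_def by blast
      show ?thesis
      proof (cases "(i, j) \<in> P")
        case True then show ?thesis using ij unfolding fat_def by blast
      next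
        case False
        then have "blockcount \<beta> lt i j = 0" using a ij unfolding Ext_def by auto
        then have "(\<Sum>b\<in>blockQ \<beta> j. lt a b) = 0"
          unfolding blockcount_def using ij finite_blockQ by (simp add: sum_eq_0_iff)
        then have "lt a b = 0" using ij finite_blockQ by (simp add: sum_eq_0_iff)
        then show ?thesis using nz by simp
      qed
    qed
    then have "rook (fat \<beta> P) lt" using a unfolding rook_def by blast
    moreover have "\<forall>(i, j) \<in> P. blockcount \<beta> lt i j = lam i j"
    proof (clarify)
      fix i j assume ij: "(i, j) \<in> P"
      then have "(i, j) \<in> ?L" using PL by blast
      then have "blockcount \<beta> lt i j = Ext P lam i j" using a by blast
      then show "blockcount \<beta> lt i j = lam i j" using ij unfolding Ext_def by simp
    qed
    ultimately show "rook (fat \<beta> P) lt \<and> (\<forall>(i, j) \<in> P. blockcount \<beta> lt i j = lam i j)" by blast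
  qed
qed


theorem mainTheorem7:
  fixes \<theta> :: "'a::{finite,field} \<Rightarrow> complex"
    and \<beta> :: "nat list" and P :: "(nat \<times> nat) set"
    and lam :: "nat \<Rightarrow> nat \<Rightarrow> nat" and u :: "'a mat"
  assumes hom: "\<forall>x y. \<theta> (x + y) = \<theta> x * \<theta> y"
    and units: "\<forall>x. \<theta> x \<noteq> 0"
    and nontriv: "\<exists>x. \<theta> x \<noteq> 1"
    and comp: "\<forall>b \<in> set \<beta>. 0 < b"
    and poset: "subposet (length \<beta>) P"
    and normal: "normal_sub (Lord (length \<beta>)) P"
    and lam: "lam \<in> Tset \<beta> P"
    and u: "u \<in> UTR (sum_list \<beta>) (fat \<beta> P)"
  shows "chi \<theta> \<beta> P lam u / chi \<theta> \<beta> P lam (idm (sum_list \<beta>)) =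
         chi \<theta> \<beta> (Lord (length \<beta>)) (Ext P lam) u /
         chi \<theta> \<beta> (Lord (length \<beta>)) (Ext P lam) (idm (sum_list \<beta>))"
proof -
  let ?n = "sum_list \<beta>" and ?L = "Lord (length \<beta>)"
  let ?UP = "utR ?n (fat \<beta> P)" and ?UL = "utR ?n (fat \<beta> ?L)"
  let ?G = "Pbeta \<beta> :: 'a mat set"
  have PL: "P \<subseteq> ?L" using normal unfolding normal_sub_def by blast
  have fs: "fat \<beta> P \<subseteq> fat \<beta> ?L" using fat_mono PL by blast
  define lt where "lt = (SOME lt. rook (fat \<beta> P) lt \<and> (\<forall>(i, j) \<in> P. blockcount \<beta> lt i j = lam i j))"
  have lt2: "lt = (SOME lt. rook (fat \<beta> ?L) lt \<and> (\<forall>(i, j) \<in> ?L. blockcount \<beta> lt i j = Ext P lam i j))"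
    unfolding lt_def using pred_eq[OF PL, where lam=lam] by simp
  define yP where "yP = (estar ?n (fat \<beta> P) lt :: 'a mat \<Rightarrow> 'a)"
  define yL where "yL = (estar ?n (fat \<beta> ?L) lt :: 'a mat \<Rightarrow> 'a)"
  have cP: "chi \<theta> \<beta> P lam = schar \<theta> \<beta> P yP" unfolding chi_def yP_def lt_def ..
  have cL: "chi \<theta> \<beta> ?L (Ext P lam) = schar \<theta> \<beta> ?L yL" unfolding chi_def yL_def lt2 ..
  have vP: "\<forall>x. x \<notin> ?UP \<longrightarrow> yP x = 0" unfolding yP_def estar_def funrest_def by simp
  have vL: "\<forall>x. x \<notin> ?UL \<longrightarrow> yL x = 0" unfolding yL_def estar_def funrest_def by simp
  define SP where "SP = (\<lambda>w. \<Sum>p\<in>?G \<times> ?G. \<theta> (act \<beta> P (fst p) yP (snd p) w))"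
  define SL where "SL = (\<lambda>w. \<Sum>p\<in>?G \<times> ?G. \<theta> (act \<beta> ?L (fst p) yL (snd p) w))"
  have SPL: "SP w = SL w" if w: "w \<in> ?UP" for w
    unfolding SP_def SL_def
  proof (rule sum.cong[OF refl])
    fix p assume p: "p \<in> ?G \<times> ?G"
    let ?w = "mmult ?n (mmult ?n (minv ?n (fst p)) w) (minv ?n (snd p))"
    have b1: "minv ?n (fst p) \<in> BT \<beta>" proof -
      have "fst p \<in> ?G" using p by auto
      then have "minv ?n (fst p) \<in> ?G" by (rule Pbeta_props(1))
      then show ?thesis by (simp add: Pbeta_alt)
    qed
    have b2: "minv ?n (snd p) \<in> BT \<beta>" proof -
      have "snd p \<in> ?G" using p by auto
      then have "minv ?n (snd p) \<in> ?G" by (rule Pbeta_props(1))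
      then show ?thesis by (simp add: Pbeta_alt)
    qed
    have st: "?w \<in> ?UP" by (rule ut_stable[OF normal b1 b2 w])
    have "w \<in> ?UL" using w utR_mono[OF fs] by blast
    then show "\<theta> (act \<beta> P (fst p) yP (snd p) w) = \<theta> (act \<beta> ?L (fst p) yL (snd p) w)"
      using w st estar_eq[OF fs st, where lt=lt] unfolding act_def funrest_def yP_def yL_def by simp
  qed
  obtain x where x: "x \<in> ?UP" "u = madd (idm ?n) x" using u unfolding UTR_def by blast
  have mu: "msub u (idm ?n) = x" unfolding x(2) madd_def msub_def by simp
  have m1: "msub (idm ?n) (idm ?n) = (\<lambda>a b. 0 :: 'a)" unfolding msub_def by simp
  have z: "(\<lambda>a b. 0 :: 'a) \<in> ?UP" unfolding utR_def matsN_def by simp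
  note aP = schar_avg[OF normal vP] and aL = schar_avg[OF normal_Lord vL]
  define kP where "kP = (of_nat (card {p \<in> ?G \<times> ?G. act \<beta> P (fst p) yP (snd p) = yP}) :: complex)"
  define kL where "kL = (of_nat (card {p \<in> ?G \<times> ?G. act \<beta> ?L (fst p) yL (snd p) = yL}) :: complex)"
  have kP0: "kP \<noteq> 0" unfolding kP_def using aP(2) by simp
  have kL0: "kL \<noteq> 0" unfolding kL_def using aL(2) by simp
  have eP: "schar \<theta> \<beta> P yP v = SP (msub v (idm ?n)) / kP" for v
  proof -
    have "kP * schar \<theta> \<beta> P yP v = SP (msub v (idm ?n))"
      unfolding kP_def SP_def by (rule aP(1))
    then show ?thesis using kP0 by (simp add: eq_divide_eq mult.commute)
  qed
  have eL: "schar \<theta> \<beta> ?L yL v = SL (msub v (idm ?n)) / kL" for v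
  proof -
    have "kL * schar \<theta> \<beta> ?L yL v = SL (msub v (idm ?n))"
      unfolding kL_def SL_def by (rule aL(1))
    then show ?thesis using kL0 by (simp add: eq_divide_eq mult.commute)
  qed
  have dd: "(a / k) / (b / k) = a / b" if "k \<noteq> 0" for a b k :: complex
    using that by (cases "b = 0") (simp_all add: field_simps)
  have "chi \<theta> \<beta> P lam u / chi \<theta> \<beta> P lam (idm ?n) = SP x / SP (\<lambda>a b. 0)"
    unfolding cP eP mu m1 by (rule dd[OF kP0])
  also have "\<dots> = SL x / SL (\<lambda>a b. 0)" by (simp only: SPL[OF x(1)] SPL[OF z])
  also have "\<dots> = chi \<theta> \<beta> ?L (Ext P lam) u / chi \<theta> \<beta> ?L (Ext P lam) (idm ?n)"
    unfolding cL eL mu m1 by (rule dd[OF kL0, symmetric])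
  finally show ?thesis .
qed

end
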